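(* Let $\mathcal K$ be an abstract Krivine structure and $\mathcal A_{\mathcal K\bullet}=(\mathcal P_\bullet(\Pi),\circ_\bullet,\to_\bullet,\supseteq,\mathsf k_\bullet,\mathsf s_\bullet,\Phi)$ the associated full adjunction implicative ordered combinatory algebra. Then the indexed preorders $\mathbf P_\bullet(\mathcal K)$ and $\mathbf P(\mathcal A_{\mathcal K\bullet})$ are isomorphic; namely, for every set $I$ and all $\varphi,\psi:I\to\mathcal P_\bullet(\Pi)$: there is $t\in\mathrm{QP}$ with $t\perp\varphi(i)\to_\bullet\psi(i)$ for all $i\in I$ if and only if there is $r\in\Phi$ with $r\circ_\bullet\varphi(i)\supseteq\psi(i)$ for all $i\in I$.
   Context: An abstract Krivine structure $\mathcal K$ consists of sets $\Lambda,\Pi$, a relation $\perp\subseteq\Lambda\times\Pi$ ($t\perp P$ means $t\perp\pi$ for all $\pi\in P$), a map $\mathrm{push}$ written $t\cdot\pi$ (associating to the right), an application $ts$ on $\Lambda$ (associating to the left), a subset $\mathrm{QP}\subseteq\Lambda$ closed under application, and $\mathsf K,\mathsf S\in\mathrm{QP}$ with: $t\perp s\cdot\pi\Rightarrow ts\perp\pi$; $t\perp\pi\Rightarrow\mathsf K\perp t\cdot s\cdot\pi$; $tu(su)\perp\pi\Rightarrow\mathsf S\perp t\cdot s\cdot u\cdot\pi$. Polars: $L^\perp=\{\pi:\forall t\in L,\ t\perp\pi\}$, ${}^\perp P=\{t:\forall\pi\in P,\ t\perp\pi\}$; $\overline P=({}^\perp P)^\perp$; $\widehat P=\bigcup_{\pi\in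 P}\overline{\{\pi\}}$; $\mathcal P_\bullet(\Pi)=\{P:\widehat P=P\}$. $P\to_\bullet Q=\widehat{\{t\cdot\pi:t\in{}^\perp P,\pi\in Q\}}$; $P\circ_\bullet Q=\{\pi:t\cdot\pi'\in P\ \forall t\in{}^\perp Q,\ \pi'\in\overline{\{\pi\}}\}$; $\mathsf E=\mathsf S(\mathsf K(\mathsf S\mathsf K\mathsf K))$, $\mathsf B=\mathsf S(\mathsf K\mathsf S)\mathsf K$, $\mathsf k_\bullet=\{\mathsf E\mathsf K\}^\perp$, $\mathsf s_\bullet=\{\mathsf E((\mathsf B\mathsf E)\mathsf S)\}^\perp$, $\Phi=\{P\in\mathcal P_\bullet(\Pi):\exists t\in\mathrm{QP},\ t\perp P\}$. $\mathbf P_\bullet(\mathcal K)$ is the functor $\mathbf{Set}^{op}\to\mathbf{Ord}$, $I\mapsto(\mathcal P_\bullet(\Pi)^I,\vdash)$ with $\varphi\vdash\psi$ iff $\exists t\in\mathrm{QP}\ \forall i,\ t\perp\varphi(i)\to_\bullet\psi(i)$, and $f\mapsto(\varphi\mapsto\varphi\circ f)$. For an ordered combinatory algebra $\mathcal A$ with carrier $A$, order $\le$ and filter $\Phi$, $\mathbf P(\mathcal A)$ is $I\mapsto(A^I,\vdash)$ with $\varphi\vdash\psi$ iff $\exists r\in\Phi\ \forall i,\ r\varphi(i)\le\psi(i)$, and $f\mapsto(\varphi\mapsto\varphi\circ f)$; for $\mathcal A_{\mathcal K\bullet}$, $\le$ is $\supseteq$ and application is $\circ_\bullet$. *)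

theory Defs
  imports Main
begin

text \<open>Abstract Krivine structure: terms of type 't (Lambda), stacks of type 'p (Pi).
  perp t pi is t orthogonal to pi, push t pi is t . pi, app t s is ts.\<close>

locale krivine_structure =
  fixes perp :: "'t \<Rightarrow> 'p \<Rightarrow> bool"
    and push :: "'t \<Rightarrow> 'p \<Rightarrow> 'p"
    and app :: "'t \<Rightarrow> 't \<Rightarrow> 't"
    and QP :: "'t set"
    and K :: 't and S :: 't
  assumes QP_app: "t \<in> QP \<Longrightarrow> s \<in> QP \<Longrightarrow> app t s \<in> QP"
    and K_QP: "K \<in> QP" and S_QP: "S \<in> QP"
    and perp_app: "perp t (push s \<pi>) \<Longrightarrow> perp (app t s) \<pi>"
    and perp_K: "perp t \<pi> \<Longrightarrow> perp K (push t (push s \<pi>))"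
    and perp_S: "perp (app (app t u) (app s u)) \<pi> \<Longrightarrow> perp S (push t (push s (push u \<pi>)))"

definition polL :: "('t \<Rightarrow> 'p \<Rightarrow> bool) \<Rightarrow> 't set \<Rightarrow> 'p set" where
  "polL perp L = {\<pi>. \<forall>t\<in>L. perp t \<pi>}"

definition polR :: "('t \<Rightarrow> 'p \<Rightarrow> bool) \<Rightarrow> 'p set \<Rightarrow> 't set" where
  "polR perp P = {t. \<forall>\<pi>\<in>P. perp t \<pi>}"

definition bclosure :: "('t \<Rightarrow> 'p \<Rightarrow> bool) \<Rightarrow> 'p set \<Rightarrow> 'p set" where
  "bclosure perp P = polL perp (polR perp P)"

definition bhat :: "('t \<Rightarrow> 'p \<Rightarrow> bool) \<Rightarrow> 'p set \<Rightarrow> 'p set" where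
  "bhat perp P = (\<Union>\<pi>\<in>P. bclosure perp {\<pi>})"

definition Pbul :: "('t \<Rightarrow> 'p \<Rightarrow> bool) \<Rightarrow> 'p set set" where
  "Pbul perp = {P. bhat perp P = P}"

definition arr_bul :: "('t \<Rightarrow> 'p \<Rightarrow> bool) \<Rightarrow> ('t \<Rightarrow> 'p \<Rightarrow> 'p) \<Rightarrow> 'p set \<Rightarrow> 'p set \<Rightarrow> 'p set" where
  "arr_bul perp push P Q = bhat perp {push t \<pi> | t \<pi>. t \<in> polR perp P \<and> \<pi> \<in> Q}"

definition app_bul :: "('t \<Rightarrow> 'p \<Rightarrow> bool) \<Rightarrow> ('t \<Rightarrow> 'p \<Rightarrow> 'p) \<Rightarrow> 'p set \<Rightarrow> 'p set \<Rightarrow> 'p set" where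
  "app_bul perp push P Q = {\<pi>. \<forall>t\<in>polR perp Q. \<forall>\<pi>'\<in>bclosure perp {\<pi>}. push t \<pi>' \<in> P}"

definition Phi_bul :: "('t \<Rightarrow> 'p \<Rightarrow> bool) \<Rightarrow> 't set \<Rightarrow> 'p set set" where
  "Phi_bul perp QP = {P \<in> Pbul perp. \<exists>t\<in>QP. \<forall>\<pi>\<in>P. perp t \<pi>}"

definition combE :: "('t \<Rightarrow> 't \<Rightarrow> 't) \<Rightarrow> 't \<Rightarrow> 't \<Rightarrow> 't" where
  "combE app K S = app S (app K (app (app S K) K))"
definition combB :: "('t \<Rightarrow> 't \<Rightarrow> 't) \<Rightarrow> 't \<Rightarrow> 't \<Rightarrow> 't" where
  "combB app K S = app (app S (app K S)) K"
definition k_bul :: "('t \<Rightarrow> 'p \<Rightarrow> bool) \<Rightarrow> ('t \<Rightarrow> 't \<Rightarrow> 't) \<Rightarrow> 't \<Rightarrow> 't \<Rightarrow> 'p set" where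
  "k_bul perp app K S = polL perp {app (combE app K S) K}"
definition s_bul :: "('t \<Rightarrow> 'p \<Rightarrow> bool) \<Rightarrow> ('t \<Rightarrow> 't \<Rightarrow> 't) \<Rightarrow> 't \<Rightarrow> 't \<Rightarrow> 'p set" where
  "s_bul perp app K S = polL perp {app (combE app K S) (app (app (combB app K S) (combE app K S)) S)}"

end

theory Submission
  imports Defs
begin

lemma bcl_self: "\<pi> \<in> bclosure perp {\<pi>}"
  by (auto simp: bclosure_def polL_def polR_def)

lemma bhat_perp: "\<forall>\<pi>\<in>X. perp t \<pi> \<Longrightarrow> \<forall>\<pi>\<in>bhat perp X. perp t \<pi>"
  by (auto simp: bhat_def bclosure_def polL_def polR_def)

lemma Pbul_cl: "P \<in> Pbul perp \<Longrightarrow> \<pi> \<in> P \<Longrightarrow> \<pi>' \<in> bclosure perp {\<pi>} \<Longrightarrow> \<pi>' \<in> P"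
  unfolding Pbul_def bhat_def by blast

lemma polL_Pbul: "polL perp {t} \<in> Pbul perp"
proof -
  have "bhat perp (polL perp {t}) = polL perp {t}"
  proof
    show "bhat perp (polL perp {t}) \<subseteq> polL perp {t}"
      using bhat_perp[of "polL perp {t}" perp t] by (auto simp: polL_def)
    show "polL perp {t} \<subseteq> bhat perp (polL perp {t})"
      using bcl_self unfolding bhat_def by fast
  qed
  thus ?thesis by (simp add: Pbul_def)
qed

theorem mainTheorem16:
  fixes perp :: "'t \<Rightarrow> 'p \<Rightarrow> bool" and push :: "'t \<Rightarrow> 'p \<Rightarrow> 'p"
    and app :: "'t \<Rightarrow> 't \<Rightarrow> 't" and QP :: "'t set" and K S :: 't
    and I :: "'i set" and \<phi> \<psi> :: "'i \<Rightarrow> 'p set"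
  assumes "krivine_structure perp push app QP K S"
    and "\<forall>i\<in>I. \<phi> i \<in> Pbul perp"
    and "\<forall>i\<in>I. \<psi> i \<in> Pbul perp"
  shows "(\<exists>t\<in>QP. \<forall>i\<in>I. \<forall>\<pi>\<in>arr_bul perp push (\<phi> i) (\<psi> i). perp t \<pi>)
     \<longleftrightarrow> (\<exists>r\<in>Phi_bul perp QP. \<forall>i\<in>I. \<psi> i \<subseteq> app_bul perp push r (\<phi> i))"
proof
  assume "\<exists>t\<in>QP. \<forall>i\<in>I. \<forall>\<pi>\<in>arr_bul perp push (\<phi> i) (\<psi> i). perp t \<pi>"
  then obtain t where t: "t \<in> QP" and ht: "\<forall>i\<in>I. \<forall>\<pi>\<in>arr_bul perp push (\<phi> i) (\<psi> i). perp t \<pi>"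
    by blast
  have r: "polL perp {t} \<in> Phi_bul perp QP"
    using polL_Pbul t by (auto simp: Phi_bul_def polL_def)
  have "\<forall>i\<in>I. \<psi> i \<subseteq> app_bul perp push (polL perp {t}) (\<phi> i)"
  proof (intro ballI subsetI)
    fix i \<pi> assume i: "i \<in> I" and p: "\<pi> \<in> \<psi> i"
    show "\<pi> \<in> app_bul perp push (polL perp {t}) (\<phi> i)"
      unfolding app_bul_def
    proof (intro CollectI ballI)
      fix s \<pi>' assume s: "s \<in> polR perp (\<phi> i)" and p': "\<pi>' \<in> bclosure perp {\<pi>}"
      have "\<pi>' \<in> \<psi> i" using Pbul_cl[OF _ p p'] assms(3) i by blast
      then have m: "push s \<pi>' \<in> {push t \<pi> |t \<pi>. t \<in> polR perp (\<phi> i) \<and> \<pi> \<in> \<psi> i}"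
        using s by blast
      have "push s \<pi>' \<in> arr_bul perp push (\<phi> i) (\<psi> i)"
        unfolding arr_bul_def bhat_def by (rule UN_I[OF m bcl_self])
      thus "push s \<pi>' \<in> polL perp {t}" using ht i by (auto simp: polL_def)
    qed
  qed
  thus "\<exists>r\<in>Phi_bul perp QP. \<forall>i\<in>I. \<psi> i \<subseteq> app_bul perp push r (\<phi> i)" using r by blast
next
  assume "\<exists>r\<in>Phi_bul perp QP. \<forall>i\<in>I. \<psi> i \<subseteq> app_bul perp push r (\<phi> i)"
  then obtain r where r: "r \<in> Phi_bul perp QP" and hr: "\<forall>i\<in>I. \<psi> i \<subseteq> app_bul perp push r (\<phi> i)"
    by blast
  then obtain t where t: "t \<in> QP" and tr: "\<forall>\<pi>\<in>r. perp t \<pi>" by (auto simp: Phi_bul_def)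
  have "\<forall>i\<in>I. \<forall>\<pi>\<in>arr_bul perp push (\<phi> i) (\<psi> i). perp t \<pi>"
  proof
    fix i assume i: "i \<in> I"
    have "\<forall>\<pi>\<in>{push s \<pi> | s \<pi>. s \<in> polR perp (\<phi> i) \<and> \<pi> \<in> \<psi> i}. perp t \<pi>"
    proof
      fix x assume "x \<in> {push s \<pi> | s \<pi>. s \<in> polR perp (\<phi> i) \<and> \<pi> \<in> \<psi> i}"
      then obtain s \<pi> where x: "x = push s \<pi>" and s: "s \<in> polR perp (\<phi> i)" and p: "\<pi> \<in> \<psi> i"
        by blast
      have "\<pi> \<in> app_bul perp push r (\<phi> i)" using hr i p by blast
      hence "push s \<pi> \<in> r" using s bcl_self[of \<pi> perp] unfolding app_bul_def by simp
      thus "perp t x" using tr x by blast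
    qed
    thus "\<forall>\<pi>\<in>arr_bul perp push (\<phi> i) (\<psi> i). perp t \<pi>"
      unfolding arr_bul_def by (rule bhat_perp)
  qed
  thus "\<exists>t\<in>QP. \<forall>i\<in>I. \<forall>\<pi>\<in>arr_bul perp push (\<phi> i) (\<psi> i). perp t \<pi>" using t by blast
qed

end
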